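(* For all integers $m\ge1$ and $r\ge0$: (i) for all $n,k\ge0$, $W_{m,r}(n+1,k+1)=\sum_{j\ge0}\frac{n+1}{k+1}\binom{k+j}{j}c_j\,m^j\,W_{m,r}(n,k+j)$ (a finite sum since $W_{m,r}(n,i)=0$ for $i>n$); (ii) for all $n\ge1$ and $1\le k\le n$, $W_{m,r}(n,k)-rW_{m,r}(n-1,k)=\sum_{l=k}^n\binom{n-1}{l-1}m^{n-l}W_{m,r}(l-1,k-1)$; (iii) for all $n\ge1$ and $1\le k\le n$, $k\,W_{m,r}(n,k)=\sum_{l=k}^n\binom{n}{l-1}m^{n-l}W_{m,r}(l-1,k-1)$.
   Context: For integers $m\ge1$, $n,k,r\ge0$, $W_{m,r}(n,k)$ denotes the $r$-Whitney number of the second kind, defined by $\sum_{n\ge k}W_{m,r}(n,k)\frac{z^n}{n!}=\frac{e^{rz}}{k!}\left(\frac{e^{mz}-1}{m}\right)^k$ (and $W_{m,r}(n,k)=0$ for $k>n$). The Cauchy numbers of the first kind are $c_n=\int_0^1x(x-1)\cdots(x-n+1)\,dx$, equivalently $\frac{t}{\ln(1+t)}=\sum_{n\ge0}c_n\frac{t^n}{n!}$. *)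

theory Defs
  imports "HOL-Analysis.Analysis" "HOL-Computational_Algebra.Formal_Power_Series"
begin

definition whitney2 :: "nat \<Rightarrow> nat \<Rightarrow> nat \<Rightarrow> nat \<Rightarrow> real" where
  "whitney2 m r n k =
     fact n * fps_nth (fps_const (1 / fact k) * fps_exp (real r)
        * (fps_const (1 / real m) * (fps_exp (real m) - 1)) ^ k) n"

definition cauchy1 :: "nat \<Rightarrow> real" where
  "cauchy1 n = integral {0..1} (\<lambda>x::real. \<Prod>i<n. (x - real i))"

end

theory Submission
  imports Defs
begin

lemma binom_ode: "(1 + fps_X) * fps_deriv (fps_binomial c) = fps_const (c::real) * fps_binomial c"
proof -
  have "(1 + fps_X) * inverse (1 + fps_X :: real fps) = 1"
    by (subst mult.commute, rule inverse_mult_eq_1) simp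
  then show ?thesis by (simp add: fps_binomial_deriv fps_divide_def mult_ac)
qed

lemma K: "fps_binomial (x::real) oo (fps_exp c - 1) = fps_exp (c * x)"
proof -
  let ?E = "fps_exp c - 1 :: real fps"
  let ?G = "fps_binomial x oo ?E"
  have E0: "fps_nth ?E 0 = 0" by simp
  have "fps_deriv ?G = (fps_deriv (fps_binomial x) oo ?E) * (fps_const c * ((1 + fps_X) oo ?E))"
    by (simp add: fps_compose_deriv[OF E0] fps_compose_add_distrib)
  also have "\<dots> = fps_const c * (((1 + fps_X) * fps_deriv (fps_binomial x)) oo ?E)"
    by (simp add: fps_compose_mult_distrib[OF E0] mult_ac)
  also have "\<dots> = fps_const (c * x) * ?G"
    by (simp only: binom_ode) (simp add: fps_compose_mult_distrib[OF E0] mult_ac)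
  finally have "?G = fps_const (fps_nth ?G 0) * fps_exp (c*x)"
    using fps_exp_unique_ODE by blast
  then show ?thesis by simp
qed

definition U :: "nat \<Rightarrow> real fps" where
  "U m = fps_const (1 / real m) * (fps_exp (real m) - 1)"
definition Fw :: "nat \<Rightarrow> nat \<Rightarrow> nat \<Rightarrow> real fps" where
  "Fw m r k = fps_const (1 / fact k) * fps_exp (real r) * U m ^ k"

lemma W_def: "whitney2 m r n k = fact n * fps_nth (Fw m r k) n"
  by (simp add: whitney2_def Fw_def U_def)

lemma U0: "fps_nth (U m) 0 = 0" by (simp add: U_def)

lemma U_Suc: "m \<ge> 1 \<Longrightarrow> fps_nth (U m) (Suc i) = real m ^ i / fact (Suc i)"
  by (simp add: U_def algebra_simps)

lemma Fw_vanish: "n < k \<Longrightarrow> fps_nth (Fw m r k) n = 0"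
proof -
  assume nk: "n < k"
  have "fps_nth (U m ^ k) j = 0" if "j \<le> n" for j
    using startsby_zero_power_prefix[OF U0, of k] that nk by auto
  then show ?thesis
    unfolding Fw_def by (simp add: fps_mult_nth mult.assoc)
qed

lemma W_vanish: "n < k \<Longrightarrow> whitney2 m r n k = 0"
  by (simp add: W_def Fw_vanish)

lemma Fw_Suc: "real (Suc j) * fps_nth (Fw m r (Suc j)) n = fps_nth (Fw m r j * U m) n"
proof -
  have "fps_const (real (Suc j)) * Fw m r (Suc j) = Fw m r j * U m"
    unfolding Fw_def
    by (simp add: fps_const_mult[symmetric] mult_ac del: fps_const_mult)
  then show ?thesis by (metis fps_mult_left_const_nth)
qed

lemma Fw_deriv: "m \<ge> 1 \<Longrightarrow>
   fps_deriv (Fw m r (Suc j)) = fps_const (real r) * Fw m r (Suc j) + Fw m r j * fps_exp (real m)"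
proof -
  assume m: "m \<ge> 1"
  have dU: "fps_deriv (U m) = fps_exp (real m)"
    using m by (simp add: U_def fps_const_mult[symmetric] mult.assoc[symmetric] del: fps_const_mult)
  have h: "(1 + real j) / (fact j + fact j * real j) = 1 / (fact j::real)"
  proof -
    have "fact j + fact j * real j = fact j * (1 + real j)" by (simp add: algebra_simps)
    moreover have "fact j * (1 + real j) \<noteq> 0" by (simp add: add_pos_nonneg)
    ultimately show ?thesis by (simp add: field_simps)
  qed
  show ?thesis
    unfolding Fw_def using h
    by (simp add: fps_deriv_power dU algebra_simps fps_const_mult[symmetric] del: fps_const_mult power_Suc)
qed


lemma reindex:
  assumes "1 \<le> k" "k \<le> n"
  shows "(\<Sum>l=k..n. g l * whitney2 m r (l-1) (k-1)) = (\<Sum>i<n. g (Suc i) * whitney2 m r i (k-1))"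
proof -
  have "(\<Sum>l=k..n. g l * whitney2 m r (l-1) (k-1)) = (\<Sum>l=Suc 0..n. g l * whitney2 m r (l-1) (k-1))"
    by (rule sum.mono_neutral_left) (use assms in \<open>auto simp: W_vanish\<close>)
  also have "\<dots> = (\<Sum>i<n. g (Suc i) * whitney2 m r i (k-1))"
    by (simp add: sum.atLeast1_atMost_eq)
  finally show ?thesis .
qed

lemma term_eq:
  assumes "i < n"
  shows "fact n * (fps_nth (Fw m r j) i * (real m ^ (n - Suc i) / fact (n - i)))
         = real (n choose i) * real m ^ (n - Suc i) * (fact i * fps_nth (Fw m r j) i)"
proof -
  have "real (n choose i) = fact n / (fact i * fact (n - i))"
    using assms by (simp add: binomial_fact)
  then show ?thesis by (simp add: field_simps)
qed

lemma U_diff: "m \<ge> 1 \<Longrightarrow> i < n \<Longrightarrow> fps_nth (U m) (n - i) = real m ^ (n - Suc i) / fact (n - i)"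
  using U_Suc[of m "n - Suc i"] by (simp add: Suc_diff_Suc)

lemma part3:
  assumes m: "m \<ge> 1" and k: "1 \<le> k" "k \<le> n"
  shows "real k * whitney2 m r n k =
     (\<Sum>l=k..n. real (n choose (l-1)) * real m ^ (n-l) * whitney2 m r (l-1) (k-1))"
proof -
  obtain j where j: "k = Suc j" using k by (cases k) auto
  have "real k * whitney2 m r n k = fact n * fps_nth (Fw m r j * U m) n"
    using Fw_Suc[of j m r n] by (simp add: W_def j del: of_nat_Suc)
  also have "\<dots> = fact n * (\<Sum>i<Suc n. fps_nth (Fw m r j) i * fps_nth (U m) (n - i))"
    by (simp add: fps_mult_nth atLeast0AtMost lessThan_Suc_atMost)
  also have "\<dots> = (\<Sum>i<n. fact n * (fps_nth (Fw m r j) i * (real m ^ (n - Suc i) / fact (n - i))))"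
    by (simp add: U0 sum_distrib_left U_diff[OF m] del: of_nat_Suc fact_Suc)
  also have "\<dots> = (\<Sum>i<n. real (n choose i) * real m ^ (n - Suc i) * whitney2 m r i (k-1))"
  proof (rule sum.cong)
    fix i assume "i \<in> {..<n}"
    then show "fact n * (fps_nth (Fw m r j) i * (real m ^ (n - Suc i) / fact (n - i))) =
      real (n choose i) * real m ^ (n - Suc i) * whitney2 m r i (k-1)"
      using term_eq[of i n m r j] by (simp add: W_def j)
  qed simp
  also have "\<dots> = (\<Sum>l=k..n. real (n choose (l-1)) * real m ^ (n-l) * whitney2 m r (l-1) (k-1))"
    using reindex[OF k, of "\<lambda>l. real (n choose (l-1)) * real m ^ (n-l)" m r] by simp
  finally show ?thesis .
qed

lemma part2:
  assumes m: "m \<ge> 1" and k: "1 \<le> k" "k \<le> n"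
  shows "whitney2 m r n k - real r * whitney2 m r (n-1) k =
     (\<Sum>l=k..n. real ((n-1) choose (l-1)) * real m ^ (n-l) * whitney2 m r (l-1) (k-1))"
proof -
  obtain j where j: "k = Suc j" using k by (cases k) auto
  obtain p where p: "n = Suc p" using k by (cases n) auto
  have "fps_nth (fps_deriv (Fw m r (Suc j))) p = real r * fps_nth (Fw m r (Suc j)) p
        + fps_nth (Fw m r j * fps_exp (real m)) p"
    by (simp add: Fw_deriv[OF m] del: fps_deriv_nth)
  then have e: "real (Suc p) * fps_nth (Fw m r (Suc j)) (Suc p) - real r * fps_nth (Fw m r (Suc j)) p
        = fps_nth (Fw m r j * fps_exp (real m)) p" by simp
  have "whitney2 m r n k - real r * whitney2 m r (n-1) k =
     fact p * (real (Suc p) * fps_nth (Fw m r (Suc j)) (Suc p) - real r * fps_nth (Fw m r (Suc j)) p)"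
    by (simp add: W_def j p algebra_simps del: of_nat_Suc)
  also have "\<dots> = fact p * (\<Sum>i<Suc p. fps_nth (Fw m r j) i * (real m ^ (p - i) / fact (p - i)))"
    unfolding e by (simp add: fps_mult_nth atLeast0AtMost lessThan_Suc_atMost)
  also have "\<dots> = (\<Sum>i<Suc p. real (p choose i) * real m ^ (p - i) * whitney2 m r i (k-1))"
    unfolding sum_distrib_left
  proof (rule sum.cong)
    fix i assume "i \<in> {..<Suc p}"
    then have "i \<le> p" by simp
    then have "real (p choose i) = fact p / (fact i * fact (p - i))"
      by (simp add: binomial_fact)
    then show "fact p * (fps_nth (Fw m r j) i * (real m ^ (p - i) / fact (p - i))) =
       real (p choose i) * real m ^ (p - i) * whitney2 m r i (k-1)"
      by (simp add: W_def j field_simps)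
  qed simp
  also have "\<dots> = (\<Sum>l=k..n. real ((n-1) choose (l-1)) * real m ^ (n-l) * whitney2 m r (l-1) (k-1))"
    using reindex[OF k, of "\<lambda>l. real ((n-1) choose (l-1)) * real m ^ (n-l)" m r] by (simp add: p)
  finally show ?thesis .
qed


lemma FE: "m \<ge> 1 \<Longrightarrow> Fw m r k * (fps_exp (real m) - 1) ^ j
   = fps_const (real m ^ j * fact (k+j) / fact k) * Fw m r (k+j)"
proof -
  assume m: "m \<ge> 1"
  have E: "fps_exp (real m) - 1 = fps_const (real m) * U m"
    using m by (simp add: U_def mult.assoc[symmetric] fps_const_mult[symmetric] del: fps_const_mult)
  have c: "fps_const (1 / fact k) * fps_const (real m ^ j) =
     fps_const (real m ^ j * fact (k+j) / fact k) * (fps_const (1 / fact (k+j)) :: real fps)"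
    by (simp add: fps_const_mult[symmetric] del: fps_const_mult)
  show ?thesis
    unfolding E Fw_def power_mult_distrib fps_const_power power_add
    using c by (simp add: mult_ac)
qed

lemma stepA:
  assumes m: "m \<ge> 1"
  shows "(\<Sum>j\<le>n. real ((k+j) choose j) * (\<Prod>i<j. (x - real i)) * real m ^ j * whitney2 m r n (k+j))
     = fact n * fps_nth (Fw m r k * fps_exp (real m * x)) n"
proof -
  define E where "E = (fps_exp (real m) - 1 :: real fps)"
  define S where "S = (\<Sum>j\<le>n. fps_const (x gchoose j) * E ^ j)"
  have E0: "fps_nth E 0 = 0" by (simp add: E_def)
  have Ez: "fps_nth (E ^ j) t = 0" if "t < j" for j t
    using startsby_zero_power_prefix[OF E0, of j] that by auto
  have 1: "fps_nth (fps_exp (real m * x)) t = fps_nth S t" if "t \<le> n" for t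
  proof -
    have "fps_nth (fps_exp (real m * x)) t = (\<Sum>i=0..t. (x gchoose i) * fps_nth (E ^ i) t)"
      by (simp add: K[symmetric] E_def fps_compose_nth)
    also have "\<dots> = (\<Sum>i\<le>n. (x gchoose i) * fps_nth (E ^ i) t)"
      by (rule sum.mono_neutral_left) (use that in \<open>auto simp: Ez\<close>)
    also have "\<dots> = fps_nth S t"
      by (simp add: S_def fps_sum_nth)
    finally show ?thesis .
  qed
  have "fps_nth (Fw m r k * fps_exp (real m * x)) n = fps_nth (Fw m r k * S) n"
    by (simp add: fps_mult_nth 1 del: fps_exp_nth)
  also have "Fw m r k * S = (\<Sum>j\<le>n. fps_const (x gchoose j) * (Fw m r k * E ^ j))"
    by (simp add: S_def sum_distrib_left mult_ac)
  also have "\<dots> = (\<Sum>j\<le>n. fps_const ((x gchoose j) * (real m ^ j * fact (k+j) / fact k)) * Fw m r (k+j))"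
    by (simp add: E_def FE[OF m] mult.assoc[symmetric])
  finally have "fact n * fps_nth (Fw m r k * fps_exp (real m * x)) n =
     (\<Sum>j\<le>n. (x gchoose j) * (real m ^ j * fact (k+j) / fact k) * whitney2 m r n (k+j))"
    by (simp add: fps_sum_nth sum_distrib_left W_def mult_ac)
  also have "\<dots> = (\<Sum>j\<le>n. real ((k+j) choose j) * (\<Prod>i<j. (x - real i)) * real m ^ j * whitney2 m r n (k+j))"
  proof (rule sum.cong)
    fix j
    have A: "fact j * (fact k * real ((k+j) choose j)) = (fact (k+j) :: real)"
      by (simp add: binomial_fact)
    have B: "fact j * (x gchoose j) = (\<Prod>i<j. (x - real i))"
      by (simp add: gbinomial_prod_rev lessThan_atLeast0)
    have "(x gchoose j) * (real m ^ j * fact (k+j) / fact k) =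
       real ((k+j) choose j) * (\<Prod>i<j. (x - real i)) * real m ^ j"
      by (simp only: A[symmetric] B[symmetric]) (simp add: field_simps)
    then show "(x gchoose j) * (real m ^ j * fact (k+j) / fact k) * whitney2 m r n (k+j) =
       real ((k+j) choose j) * (\<Prod>i<j. (x - real i)) * real m ^ j * whitney2 m r n (k+j)"
      by simp
  qed simp
  finally show ?thesis by simp
qed

lemma stepB:
  "fact n * fps_nth (Fw m r k * fps_exp (real m * x)) n =
   (\<Sum>i\<le>n. (fact n * fps_nth (Fw m r k) i * real m ^ (n-i) / fact (n-i)) * x ^ (n-i))"
  by (simp add: fps_mult_nth atLeast0AtMost sum_distrib_left power_mult_distrib mult_ac)


lemma mono_int: "((\<lambda>x::real. x ^ d) has_integral (1 / real (Suc d))) {0..1}"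
proof -
  have "((\<lambda>x::real. x ^ d) has_integral ((\<lambda>x. x ^ Suc d / real (Suc d)) 1 - (\<lambda>x. x ^ Suc d / real (Suc d)) 0)) {0..1}"
  proof (rule fundamental_theorem_of_calculus)
    fix x :: real
    have "((\<lambda>x. x ^ Suc d / real (Suc d)) has_real_derivative x ^ d) (at x within {0..1})"
      by (rule derivative_eq_intros refl | simp del: of_nat_Suc)+
    then show "((\<lambda>x. x ^ Suc d / real (Suc d)) has_vector_derivative x ^ d) (at x within {0..1})"
      by (simp add: has_real_derivative_iff_has_vector_derivative)
  qed simp
  then show ?thesis by simp
qed

lemma prod_int: "((\<lambda>x::real. \<Prod>i<j. (x - real i)) has_integral cauchy1 j) {0..1}"
  unfolding cauchy1_def
  by (rule integrable_integral, rule integrable_continuous_real, intro continuous_intros)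

lemma stepC:
  assumes m: "m \<ge> 1"
  shows "(\<Sum>j\<le>n. real ((k+j) choose j) * cauchy1 j * real m ^ j * whitney2 m r n (k+j))
     = (\<Sum>i\<le>n. (fact n * fps_nth (Fw m r k) i * real m ^ (n-i) / fact (n-i)) * (1 / real (Suc (n-i))))"
proof (rule has_integral_unique)
  show "((\<lambda>x. \<Sum>j\<le>n. real ((k+j) choose j) * (\<Prod>i<j. (x - real i)) * real m ^ j * whitney2 m r n (k+j))
     has_integral (\<Sum>j\<le>n. real ((k+j) choose j) * cauchy1 j * real m ^ j * whitney2 m r n (k+j))) {0..1}"
    by (intro has_integral_sum finite_atMost has_integral_mult_left has_integral_mult_right prod_int)
  have "((\<lambda>x. \<Sum>i\<le>n. (fact n * fps_nth (Fw m r k) i * real m ^ (n-i) / fact (n-i)) * x ^ (n-i))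
     has_integral (\<Sum>i\<le>n. (fact n * fps_nth (Fw m r k) i * real m ^ (n-i) / fact (n-i)) * (1 / real (Suc (n-i))))) {0..1}"
    by (intro has_integral_sum finite_atMost has_integral_mult_right mono_int)
  then show "((\<lambda>x. \<Sum>j\<le>n. real ((k+j) choose j) * (\<Prod>i<j. (x - real i)) * real m ^ j * whitney2 m r n (k+j))
     has_integral (\<Sum>i\<le>n. (fact n * fps_nth (Fw m r k) i * real m ^ (n-i) / fact (n-i)) * (1 / real (Suc (n-i))))) {0..1}"
    by (simp add: stepA[OF m] stepB)
qed


lemma part1:
  assumes m: "m \<ge> 1"
  shows "whitney2 m r (n+1) (k+1) =
            (\<Sum>j\<le>n. real (n+1) / real (k+1) * real ((k+j) choose j) * cauchy1 j
                      * real m ^ j * whitney2 m r n (k+j))"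
proof -
  have "real (Suc k) * whitney2 m r (Suc n) (Suc k) = fact (Suc n) * fps_nth (Fw m r k * U m) (Suc n)"
    using Fw_Suc[of k m r "Suc n"] by (simp add: W_def del: of_nat_Suc fact_Suc)
  also have "\<dots> = fact (Suc n) * (\<Sum>i<Suc (Suc n). fps_nth (Fw m r k) i * fps_nth (U m) (Suc n - i))"
    by (simp only: fps_mult_nth atLeast0AtMost lessThan_Suc_atMost)
  also have "\<dots> = fact (Suc n) * (\<Sum>i\<le>n. fps_nth (Fw m r k) i * (real m ^ (n - i) / fact (Suc n - i)))"
    by (simp add: U0 U_diff[OF m] lessThan_Suc_atMost del: fact_Suc)
  also have "\<dots> = real (Suc n) * (\<Sum>i\<le>n. (fact n * fps_nth (Fw m r k) i * real m ^ (n-i) / fact (n-i)) * (1 / real (Suc (n-i))))"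
    unfolding sum_distrib_left
  proof (rule sum.cong)
    fix i assume "i \<in> {..n}"
    then have "Suc n - i = Suc (n - i)" by auto
    then show "fact (Suc n) * (fps_nth (Fw m r k) i * (real m ^ (n - i) / fact (Suc n - i))) =
      real (Suc n) * (fact n * fps_nth (Fw m r k) i * real m ^ (n - i) / fact (n - i) * (1 / real (Suc (n - i))))"
      by (simp add: field_simps del: of_nat_Suc)
  qed simp
  also have "\<dots> = real (Suc n) * (\<Sum>j\<le>n. real ((k+j) choose j) * cauchy1 j * real m ^ j * whitney2 m r n (k+j))"
    by (simp add: stepC[OF m])
  finally have "whitney2 m r (Suc n) (Suc k) = real (Suc n) / real (Suc k) *
      (\<Sum>j\<le>n. real ((k+j) choose j) * cauchy1 j * real m ^ j * whitney2 m r n (k+j))"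
    by (simp add: field_simps del: of_nat_Suc)
  then show ?thesis by (simp add: sum_distrib_left mult_ac)
qed

theorem mainTheorem18:
  fixes m r :: nat
  assumes "m \<ge> 1"
  shows "(\<forall>n k. whitney2 m r (n+1) (k+1) =
            (\<Sum>j\<le>n. real (n+1) / real (k+1) * real ((k+j) choose j) * cauchy1 j
                      * real m ^ j * whitney2 m r n (k+j))) \<and>
         (\<forall>n k. 1 \<le> n \<longrightarrow> 1 \<le> k \<longrightarrow> k \<le> n \<longrightarrow>
            whitney2 m r n k - real r * whitney2 m r (n-1) k =
            (\<Sum>l=k..n. real ((n-1) choose (l-1)) * real m ^ (n-l) * whitney2 m r (l-1) (k-1))) \<and>
         (\<forall>n k. 1 \<le> n \<longrightarrow> 1 \<le> k \<longrightarrow> k \<le> n \<longrightarrow>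
            real k * whitney2 m r n k =
            (\<Sum>l=k..n. real (n choose (l-1)) * real m ^ (n-l) * whitney2 m r (l-1) (k-1)))"
  using part1[OF assms] part2[OF assms] part3[OF assms] by blast

end
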